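(* Let $l,m,k$ be non-negative integers with $2l\le m\le 2k$. Then $$S(k,m,l)=\sum_{d=0}^{k+l-m}\left[\binom{m}{l}-\binom{m}{l-d-1}\right]\left[\binom{2k-m+1}{k-m+l-d}-\binom{2k-m+1}{k-m+l-d-1}\right].$$
   Context: A Dyck path of semilength $k$ (Dyck $k$-path) is a lattice path in $\mathbb{Z}^2$ starting at $(0,0)$, ending at $(2k,0)$, never going below the $x$-axis, each of whose $2k$ steps is either a rise $(1,1)$ or a fall $(1,-1)$. For a Dyck $k$-path $D$ and non-negative integers $l\le m\le 2k$, $S(D,m,l)$ denotes the number of intervals of length $m$ in $D$ (i.e. blocks of $m$ consecutive steps of $D$, one for each starting position $s\in\{1,\dots,2k-m+1\}$) that contain exactly $l$ falls; and $S(k,m,l)=\sum_{D} S(D,m,l)$, the sum over all Dyck $k$-paths $D$. Convention: $\binom{x}{y}=0$ for integers $x\ge 0$ and $y<0$, and $\binom{x}{y}=0$ if $y>x\ge 0$. *)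

theory Defs
  imports Main
begin

text \<open>A path is a list of steps: True = rise (1,1), False = fall (1,-1).\<close>

definition rises :: "bool list \<Rightarrow> nat" where
  "rises xs = length (filter (\<lambda>b. b) xs)"

definition falls :: "bool list \<Rightarrow> nat" where
  "falls xs = length (filter (\<lambda>b. \<not> b) xs)"

definition dyck_path :: "nat \<Rightarrow> bool list \<Rightarrow> bool" where
  "dyck_path k D \<longleftrightarrow> length D = 2 * k
     \<and> (\<forall>i \<le> length D. falls (take i D) \<le> rises (take i D))
     \<and> rises D = falls D"

text \<open>S(D,m,l): number of intervals of m consecutive steps of D (starting positions
  s = 1..|D|-m+1, here 0-indexed) containing exactly l falls.\<close>
definition S_path :: "bool list \<Rightarrow> nat \<Rightarrow> nat \<Rightarrow> nat" where
  "S_path D m l = card {s. s + m \<le> length D \<and> falls (take m (drop s D)) = l}"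

definition S :: "nat \<Rightarrow> nat \<Rightarrow> nat \<Rightarrow> nat" where
  "S k m l = (\<Sum>D \<in> {D. dyck_path k D}. S_path D m l)"

definition bz :: "nat \<Rightarrow> int \<Rightarrow> int" where
  "bz x y = (if y < 0 then 0 else int (x choose nat y))"

end

theory Submission
  imports Defs
begin

fun hgt :: "bool list \<Rightarrow> int" where
  "hgt [] = 0"
| "hgt (b # xs) = (if b then 1 else -1) + hgt xs"

fun ok :: "int \<Rightarrow> bool list \<Rightarrow> bool" where
  "ok h [] = (0 \<le> h)"
| "ok h (b # xs) = (0 \<le> h \<and> ok (if b then h + 1 else h - 1) xs)"

definition rc :: "bool list \<Rightarrow> bool list" where
  "rc xs = rev (map Not xs)"

definition Bset :: "nat \<Rightarrow> nat \<Rightarrow> int \<Rightarrow> bool list set" where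
  "Bset m l h = {B. length B = m \<and> falls B = l \<and> ok h B}"

lemma hgt_append[simp]: "hgt (xs @ ys) = hgt xs + hgt ys"
  by (induction xs) auto

lemma ok_ge0: "ok h xs \<Longrightarrow> 0 \<le> h"
  by (cases xs) auto

lemma ok_end: "ok h xs \<Longrightarrow> 0 \<le> h + hgt xs"
proof (induction xs arbitrary: h)
  case (Cons a xs)
  then show ?case by (cases a) (auto, fastforce+)
qed simp

lemma ok_append: "ok h (xs @ ys) \<longleftrightarrow> ok h xs \<and> ok (h + hgt xs) ys"
proof (induction xs arbitrary: h)
  case Nil
  then show ?case using ok_ge0 by auto
next
  case (Cons a xs)
  then show ?case by (auto simp: algebra_simps)
qed

lemma ok_mono: "ok a xs \<Longrightarrow> a \<le> b \<Longrightarrow> ok b xs"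
  by (induction xs arbitrary: a b) (auto split: if_splits)

lemma hgt_falls: "hgt xs = int (length xs) - 2 * int (falls xs)"
  by (induction xs) (auto simp: falls_def)

lemma hgt_rises: "hgt xs = int (rises xs) - int (falls xs)"
  by (induction xs) (auto simp: falls_def rises_def)

lemma hgt_rc[simp]: "hgt (rc xs) = - hgt xs"
  by (induction xs) (auto simp: rc_def)

lemma length_rc[simp]: "length (rc xs) = length xs"
  by (simp add: rc_def)

lemma rc_rc[simp]: "rc (rc xs) = xs"
  by (simp add: rc_def rev_map comp_def)

lemma rc_inj: "rc xs = rc ys \<Longrightarrow> xs = ys"
  by (metis rc_rc)

lemma ok_rc: "ok b (rc E) \<longleftrightarrow> ok (b - hgt E) E"
proof (induction E arbitrary: b)
  case Nil
  then show ?case by (simp add: rc_def)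
next
  case (Cons x E)
  have "rc (x # E) = rc E @ [\<not> x]" by (simp add: rc_def)
  then show ?case using Cons ok_ge0[of "b - hgt E" E]
    by (auto simp: ok_append algebra_simps)
qed

lemma ok_take: "ok h xs \<longleftrightarrow> (\<forall>i \<le> length xs. 0 \<le> h + hgt (take i xs))"
proof (induction xs arbitrary: h)
  case Nil
  then show ?case by auto
next
  case (Cons a xs)
  show ?case
  proof
    assume H: "ok h (a # xs)"
    show "\<forall>i \<le> length (a # xs). 0 \<le> h + hgt (take i (a # xs))"
    proof (intro allI impI)
      fix i assume "i \<le> length (a # xs)"
      then show "0 \<le> h + hgt (take i (a # xs))"
        using H Cons[of "if a then h + 1 else h - 1"]
        by (cases i) (auto simp: algebra_simps split: if_splits)
    qed
  next
    assume H: "\<forall>i \<le> length (a # xs). 0 \<le> h + hgt (take i (a # xs))"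
    have h0: "0 \<le> h" using H[rule_format, of 0] by simp
    have "\<forall>i \<le> length xs. 0 \<le> (if a then h + 1 else h - 1) + hgt (take i xs)"
    proof (intro allI impI)
      fix i assume "i \<le> length xs"
      then show "0 \<le> (if a then h + 1 else h - 1) + hgt (take i xs)"
        using H[rule_format, of "Suc i"] by (auto simp: algebra_simps)
    qed
    then show "ok h (a # xs)" using Cons h0 by simp
  qed
qed

lemma dyck_ok: "dyck_path k D \<longleftrightarrow> length D = 2 * k \<and> ok 0 D \<and> hgt D = 0"
  unfolding dyck_path_def ok_take hgt_rises by auto

lemma bz_Suc: "bz (Suc m) y = bz m y + bz m (y - 1)"
proof -
  consider "y < 0" | "y = 0" | "y > 0" by linarith
  then show ?thesis
  proof cases
    case 3
    then have "nat y = Suc (nat (y - 1))" by simp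
    then show ?thesis using 3 by (simp add: bz_def)
  qed (auto simp: bz_def)
qed

lemma bz_neg[simp]: "y < 0 \<Longrightarrow> bz m y = 0"
  by (simp add: bz_def)

lemma card_Bset:
  "0 \<le> h \<Longrightarrow> 2 * int l \<le> int m + h + 1 \<Longrightarrow>
   int (card (Bset m l h)) = bz m (int l) - bz m (int l - h - 1)"
proof (induction m arbitrary: l h)
  case 0
  show ?case
  proof (cases l)
    case 0
    then have "Bset 0 l h = {[]}" using \<open>0 \<le> h\<close> by (auto simp: Bset_def falls_def)
    then show ?thesis using 0 \<open>0 \<le> h\<close> by (simp add: bz_def)
  next
    case (Suc l')
    then have "Bset 0 l h = {}" by (auto simp: Bset_def falls_def)
    then show ?thesis using Suc 0 by (simp add: bz_def)
  qed
next
  case (Suc m)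
  show ?case
  proof (cases l)
    case 0
    have "Bset (Suc m) l h = Cons True ` Bset m 0 (h + 1)"
      using 0 Suc.prems
      by (auto simp: Bset_def falls_def length_Suc_conv image_iff
          filter_empty_conv split: if_splits)
    then have "card (Bset (Suc m) l h) = card (Bset m 0 (h + 1))"
      by (simp add: card_image)
    then show ?thesis using Suc.IH[of "h + 1" 0] Suc.prems 0
      by (simp add: bz_Suc)
  next
    case (Suc l')
    have eq: "Bset (Suc m) l h = Cons True ` Bset m l (h + 1) \<union> Cons False ` Bset m l' (h - 1)"
      using Suc Suc.prems
      by (auto simp: Bset_def falls_def length_Suc_conv image_iff split: if_splits)
    have fin: "finite (Bset m l'' h'')" for l'' h''
      by (rule finite_subset[of _ "{xs. set xs \<subseteq> UNIV \<and> length xs = m}"])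
        (use finite_lists_length_eq[of "UNIV::bool set" m] in \<open>auto simp: Bset_def\<close>)
    have "card (Bset (Suc m) l h) = card (Bset m l (h + 1)) + card (Bset m l' (h - 1))"
      unfolding eq
      by (subst card_Un_disjoint) (auto simp: fin card_image)
    moreover have A: "int (card (Bset m l (h + 1))) = bz m (int l) - bz m (int l - (h+1) - 1)"
      using Suc.IH[of "h + 1" l] Suc.prems by simp
    moreover have "h = 0 \<Longrightarrow> Bset m l' (h - 1) = {}"
      by (auto simp: Bset_def dest: ok_ge0)
    moreover have "0 < h \<Longrightarrow> int (card (Bset m l' (h - 1))) = bz m (int l') - bz m (int l' - (h - 1) - 1)"
      using Suc.IH[of "h - 1" l'] Suc.prems Suc by simp
    ultimately show ?thesis using Suc Suc.prems
      by (cases "h = 0") (auto simp: bz_Suc algebra_simps)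
  qed
qed


lemma split_ex: "0 \<le> h \<Longrightarrow> h < hgt P \<Longrightarrow> \<exists>A E. P = A @ True # E \<and> hgt A = h \<and> ok 0 E"
proof (induction P rule: rev_induct)
  case Nil
  then show ?case by simp
next
  case (snoc x Q)
  show ?case
  proof (cases "h < hgt Q")
    case True
    then obtain A E where AE: "Q = A @ True # E" "hgt A = h" "ok 0 E" using snoc by blast
    have "ok 0 (E @ [x])" using AE snoc.prems ok_end[OF AE(3)]
      by (auto simp: ok_append)
    then show ?thesis using AE by (intro exI[of _ A] exI[of _ "E @ [x]"]) auto
  next
    case False
    then have "x \<and> hgt Q = h" using snoc.prems by (auto split: if_splits)
    then show ?thesis by (intro exI[of _ Q] exI[of _ "[]"]) auto
  qed
qed

lemma split_uniq_aux: "A = A' @ us \<Longrightarrow> us @ True # E = True # E' \<Longrightarrow> hgt A = hgt A'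
   \<Longrightarrow> ok 0 E' \<Longrightarrow> us = []"
proof (rule ccontr)
  assume H: "A = A' @ us" "us @ True # E = True # E'" "hgt A = hgt A'" "ok 0 E'" "us \<noteq> []"
  then obtain us' where us: "us = True # us'" by (cases us) auto
  then have "E' = us' @ True # E" using H by simp
  then have "ok 0 us'" using H(4) by (simp add: ok_append)
  then have "0 \<le> hgt us'" using ok_end by fastforce
  moreover have "hgt us' = -1" using H us by simp
  ultimately show False by simp
qed

lemma split_uniq: "A @ True # E = A' @ True # E' \<Longrightarrow> hgt A = hgt A' \<Longrightarrow> ok 0 E \<Longrightarrow> ok 0 E'
   \<Longrightarrow> A = A' \<and> E = E'"
proof -
  assume H: "A @ True # E = A' @ True # E'" "hgt A = hgt A'" "ok 0 E" "ok 0 E'"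
  then obtain us where "A = A' @ us \<and> us @ True # E = True # E' \<or> A @ us = A' \<and> True # E = us @ True # E'"
    using append_eq_append_conv2[of A "True # E" A' "True # E'"] by blast
  then show ?thesis
  proof
    assume "A = A' @ us \<and> us @ True # E = True # E'"
    then show ?thesis using split_uniq_aux[of A A' us E E'] H by auto
  next
    assume "A @ us = A' \<and> True # E = us @ True # E'"
    then show ?thesis using split_uniq_aux[of A' A us E' E] H by auto
  qed
qed

theorem theorem1:
  fixes l m k :: nat
  assumes "2 * l \<le> m" and "m \<le> 2 * k"
  shows "int (S k m l) =
    (\<Sum>d \<in> {0 .. int k + int l - int m}.
       (bz m (int l) - bz m (int l - d - 1)) *
       (bz (2 * k - m + 1) (int k - int m + int l - d)
        - bz (2 * k - m + 1) (int k - int m + int l - d - 1)))"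
proof -
  define n where "n = 2*k - m"
  define K where "K = int k + int l - int m"
  define c where "c = int m - 2 * int l"
  have nK: "int n = 2 * K + c" and c0: "0 \<le> c"
    using assms by (auto simp: n_def K_def c_def)
  define Dset where "Dset = {D. dyck_path k D}"
  define fib where "fib D = {s. s + m \<le> length D \<and> falls (take m (drop s D)) = l}" for D
  define F where "F = (\<lambda>(D, s). (hgt (take s D), take m (drop s D), take s D @ True # rc (drop (s+m) D)))"
  define T where "T = Sigma {0..K} (\<lambda>h. Bset m l h \<times> Bset (n+1) (nat (K - h)) 0)"
  have finB: "finite (Bset m' l'' h'')" for m' l'' h''
    by (rule finite_subset[of _ "{xs. set xs \<subseteq> UNIV \<and> length xs = m'}"])
      (use finite_lists_length_eq[of "UNIV::bool set" m'] in \<open>auto simp: Bset_def\<close>)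
  have finD: "finite Dset"
    by (rule finite_subset[of _ "{xs. set xs \<subseteq> UNIV \<and> length xs = 2*k}"])
      (use finite_lists_length_eq[of "UNIV::bool set" "2*k"] in \<open>auto simp: Dset_def dyck_path_def\<close>)
  have finF: "finite (fib D)" for D
    by (rule finite_subset[of _ "{..length D}"]) (auto simp: fib_def)
  have S_eq: "S k m l = card (Sigma Dset fib)"
  proof -
    have "card (Sigma Dset fib) = (\<Sum>D\<in>Dset. card (fib D))"
      using card_SigmaI[OF finD, of fib] finF by simp
    then show ?thesis by (simp add: S_def S_path_def Dset_def fib_def)
  qed
  have decomp: "D = take s D @ take m (drop s D) @ drop (s+m) D" for D :: "bool list" and s
    by (metis append_take_drop_id drop_drop add.commute)
  have props: "length (take s D) = s \<and> length (take m (drop s D)) = m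
      \<and> ok 0 (take s D) \<and> ok (hgt (take s D)) (take m (drop s D))
      \<and> ok (hgt (take s D) + hgt (take m (drop s D))) (drop (s+m) D)
      \<and> hgt (take s D) + hgt (take m (drop s D)) + hgt (drop (s+m) D) = 0
      \<and> length (take s D) + m + length (drop (s+m) D) = 2 * k"
    if "(D, s) \<in> Sigma Dset fib" for D s
  proof -
    have d: "length D = 2*k" "ok 0 D" "hgt D = 0" "s + m \<le> length D"
      using that by (auto simp: Dset_def fib_def dyck_ok)
    have "ok 0 (take s D @ take m (drop s D) @ drop (s+m) D)" "hgt (take s D @ take m (drop s D) @ drop (s+m) D) = 0"
      using d decomp[of D s] by metis+
    then show ?thesis using d by (auto simp: ok_append add.assoc)
  qed
  have inj: "inj_on F (Sigma Dset fib)"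
  proof (rule inj_onI)
    fix x y assume x: "x \<in> Sigma Dset fib" and y: "y \<in> Sigma Dset fib" and Fe: "F x = F y"
    obtain D s where xs: "x = (D, s)" by (cases x)
    obtain D' s' where ys: "y = (D', s')" by (cases y)
    note p1 = props[OF x[unfolded xs]] and p2 = props[OF y[unfolded ys]]
    have e: "hgt (take s D) = hgt (take s' D')" "take m (drop s D) = take m (drop s' D')"
      "take s D @ True # rc (drop (s+m) D) = take s' D' @ True # rc (drop (s'+m) D')"
      using Fe by (auto simp: F_def xs ys)
    have o1: "ok 0 (rc (drop (s+m) D))" proof -
      have "- hgt (drop (s+m) D) = hgt (take s D) + hgt (take m (drop s D))" using p1 by linarith
      then show ?thesis using p1 ok_rc[of 0] by (metis diff_0)
    qed
    have o2: "ok 0 (rc (drop (s'+m) D'))" proof -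
      have "- hgt (drop (s'+m) D') = hgt (take s' D') + hgt (take m (drop s' D'))" using p2 by linarith
      then show ?thesis using p2 ok_rc[of 0] by (metis diff_0)
    qed
    from split_uniq[OF e(3) e(1) o1 o2] have "take s D = take s' D'" "drop (s+m) D = drop (s'+m) D'"
      by (auto dest: rc_inj)
    then have "D = D'" "s = s'" using decomp[of D s] decomp[of D' s'] e(2) p1 p2 by metis+
    then show "x = y" using xs ys by simp
  qed
  have img: "F ` Sigma Dset fib = T"
  proof
    show "F ` Sigma Dset fib \<subseteq> T"
    proof
      fix y assume "y \<in> F ` Sigma Dset fib"
      then obtain D s where ds: "(D, s) \<in> Sigma Dset fib" and y: "y = F (D, s)" by auto
      define A where "A = take s D"
      define B where "B = take m (drop s D)"
      define C where "C = drop (s+m) D"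
      define h where "h = hgt A"
      have p: "length A = s" "length B = m" "ok 0 A" "ok h B" "ok (h + hgt B) C"
        "h + hgt B + hgt C = 0" "s + m + length C = 2 * k"
        using props[OF ds] by (auto simp: A_def B_def C_def h_def)
      have fB: "falls B = l" using ds by (simp add: fib_def B_def)
      have hB: "hgt B = c" using p fB by (simp add: hgt_falls c_def)
      have h0: "0 \<le> h" using ok_end[OF p(3)] by (simp add: h_def)
      define P where "P = A @ True # rc C"
      have lP: "length P = n + 1" using p assms by (simp add: P_def n_def)
      have okC: "ok (h + 1 - hgt C) C"
      proof -
        have "h + 1 - hgt C = 2*h + c + 1" using p hB by linarith
        moreover have "ok (2*h + c + 1) C" using p hB h0 ok_mono[of "h + c" C "2*h + c + 1"] by simp
        ultimately show ?thesis by metis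
      qed
      have okP: "ok 0 P"
        using p h0 okC ok_rc[of "h+1" C]
        by (simp add: P_def ok_append h_def[symmetric])
      have hP: "hgt P = 2*h + c + 1" using p hB by (simp add: P_def h_def)
      have fP: "2 * int (falls P) = 2 * K - 2 * h"
        using hgt_falls[of P] lP hP nK by simp
      then have fP': "falls P = nat (K - h)" "h \<le> K" by auto
      have "y = (h, B, P)" using y by (simp add: F_def A_def B_def C_def h_def P_def)
      then show "y \<in> T" using fP' h0 p fB okP lP
        by (simp add: T_def Bset_def)
    qed
  next
    show "T \<subseteq> F ` Sigma Dset fib"
    proof
      fix y assume "y \<in> T"
      then obtain h B P where y: "y = (h, B, P)" and h: "0 \<le> h" "h \<le> K"
        and B: "length B = m" "falls B = l" "ok h B"
        and P: "length P = n + 1" "falls P = nat (K - h)" "ok 0 P"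
        by (auto simp: T_def Bset_def)
      have hB: "hgt B = c" using B by (simp add: hgt_falls c_def)
      have hP: "hgt P = 2*h + c + 1" using hgt_falls[of P] P h nK by simp
      obtain A E where AE: "P = A @ True # E" "hgt A = h" "ok 0 E"
        using split_ex[of h P] h hP c0 by auto
      have hE: "hgt E = h + c" using AE hP by simp
      define D where "D = A @ B @ rc E"
      define s where "s = length A"
      have lD: "length D = 2 * k" using P(1) AE B assms by (simp add: D_def n_def)
      have okA: "ok 0 A" using P(3) AE by (simp add: ok_append)
      have "ok 0 D" using okA AE B hB hE by (simp add: D_def ok_append ok_rc)
      moreover have "hgt D = 0" using AE hB hE by (simp add: D_def)
      ultimately have "D \<in> Dset" using lD by (simp add: Dset_def dyck_ok)
      moreover have "s \<in> fib D" using B by (simp add: fib_def D_def s_def)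
      moreover have "F (D, s) = y" using AE B y by (simp add: F_def D_def s_def)
      ultimately show "y \<in> F ` Sigma Dset fib" by force
    qed
  qed
  have "card (Sigma Dset fib) = card T" using card_image[OF inj] img by simp
  also have "card T = (\<Sum>h\<in>{0..K}. card (Bset m l h) * card (Bset (n+1) (nat (K - h)) 0))"
    unfolding T_def by (simp add: card_SigmaI finB card_cartesian_product)
  finally have "int (S k m l) = (\<Sum>h\<in>{0..K}. int (card (Bset m l h)) * int (card (Bset (n+1) (nat (K - h)) 0)))"
    using S_eq by simp
  also have "\<dots> = (\<Sum>d \<in> {0 .. K}.
       (bz m (int l) - bz m (int l - d - 1)) *
       (bz (2 * k - m + 1) (int k - int m + int l - d)
        - bz (2 * k - m + 1) (int k - int m + int l - d - 1)))"
  proof (rule sum.cong)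
    fix h assume "h \<in> {0..K}"
    then have h: "0 \<le> h" "h \<le> K" by auto
    have 1: "int (card (Bset m l h)) = bz m (int l) - bz m (int l - h - 1)"
      using card_Bset[of h l m] h assms by simp
    have 2: "int (card (Bset (n+1) (nat (K - h)) 0)) = bz (n+1) (int (nat (K - h))) - bz (n+1) (int (nat (K - h)) - 0 - 1)"
      using card_Bset[of 0 "nat (K - h)" "n+1"] h nK c0 by simp
    have 3: "int (nat (K - h)) = int k - int m + int l - h" using h by (simp add: K_def)
    have 4: "n + 1 = 2 * k - m + 1" by (simp add: n_def)
    show "int (card (Bset m l h)) * int (card (Bset (n+1) (nat (K - h)) 0)) =
       (bz m (int l) - bz m (int l - h - 1)) *
       (bz (2 * k - m + 1) (int k - int m + int l - h)
        - bz (2 * k - m + 1) (int k - int m + int l - h - 1))"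
      using 1 2 3 4 by simp
  qed simp
  finally show ?thesis by (simp add: K_def)
qed

end
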